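(* The Burau representation $\rho_3$ specialized at $t_0\in \mathbb{C}^{*}$ is faithful if and only if $-t_0 \notin \Sigma_*$.
   Context: The braid group $\mathcal{B}_3$ is generated by $\sigma_1,\sigma_2$ with the relation $\sigma_1\sigma_2\sigma_1=\sigma_2\sigma_1\sigma_2$. The (reduced) Burau representation $\rho_3:\mathcal{B}_3\to \mathrm{GL}(2,\mathbb{Z}[t,t^{-1}])$ is defined by $\sigma_1\mapsto\begin{pmatrix}-t&1\\ 0&1\end{pmatrix}$, $\sigma_2\mapsto\begin{pmatrix}1&0\\ t&-t\end{pmatrix}$. Its specialization $\rho_3^{t_0}:\mathcal{B}_3\to\mathrm{GL}(2,\mathbb{C})$ is given by the same matrices with $t$ replaced by a nonzero complex number $t_0\in\mathbb{C}^*=\mathbb{C}\setminus\{0\}$. $q$-rationals: let $R_q=\begin{pmatrix}q&1\\ 0&1\end{pmatrix}$, $L_q=\begin{pmatrix}1&0\\ 1&q^{-1}\end{pmatrix}$, with $R=R_q|_{q=1}$, $L=L_q|_{q=1}$ the standard generators of $\mathrm{SL}(2,\mathbb{Z})$. For $M=\begin{pmatrix}r&v\\ s&u\end{pmatrix}=R^{a_1}L^{a_2}\cdots R^{a_{2m-1}}L^{a_{2m}}\in\mathrm{SL}(2,\mathbb{Z})$, let $M_q=R_q^{a_1}L_q^{a_2}\cdots R_q^{a_{2m-1}}L_q^{a_{2m}}=\begin{pmatrix}\mathcal{R}&\mathcal{V}\\ \mathcal{S}&\mathcal{U}\end{pmatrix}$, with Laurent polynomial entries in $q$. The $q$-deformation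 of the rational $\frac{r}{s}$ (first column of $M$) is $\left[\frac{r}{s}\right]_q=\frac{\mathcal{R}(q)}{\mathcal{S}(q)}$ (independent of choices). The singular set $\Sigma\subset\mathbb{C}^*$ is the union of the complex poles of all $q$-rationals $\left[\frac{r}{s}\right]_q$, $\frac{r}{s}\in\mathbb{Q}$, and the extended singular set is $\Sigma_*=\Sigma\cup\{1\}$. *)

theory Defs
  imports "HOL-Complex_Analysis.Complex_Analysis"
begin

type_synonym cmat2 = "complex^2^2"

definition mk2 :: "complex \<Rightarrow> complex \<Rightarrow> complex \<Rightarrow> complex \<Rightarrow> cmat2" where
  "mk2 a b c d = (\<chi> i j. if i = 1 then (if j = 1 then a else b) else (if j = 1 then c else d))"

section \<open>The braid group B_3, presented by generators and relations\<close>

datatype gen = S1 | S2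

text \<open>A braid word: a list of letters (g, True) = sigma_g, (g, False) = sigma_g inverse.\<close>
type_synonym bword = "(gen \<times> bool) list"

text \<open>Equality in B_3 = congruence on words generated by free cancellation and the braid relation.\<close>
inductive braid_eq :: "bword \<Rightarrow> bword \<Rightarrow> bool" where
  refl: "braid_eq w w"
| sym: "braid_eq u w \<Longrightarrow> braid_eq w u"
| trans: "braid_eq u v \<Longrightarrow> braid_eq v w \<Longrightarrow> braid_eq u w"
| cong: "braid_eq u w \<Longrightarrow> braid_eq (x @ u @ y) (x @ w @ y)"
| cancel: "braid_eq [(g, b), (g, \<not> b)] []"
| braid: "braid_eq [(S1, True), (S2, True), (S1, True)] [(S2, True), (S1, True), (S2, True)]"

section \<open>Reduced Burau representation specialised at t\<close>

fun burau_gen :: "complex \<Rightarrow> gen \<times> bool \<Rightarrow> cmat2" where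
  "burau_gen t (S1, True) = mk2 (-t) 1 0 1"
| "burau_gen t (S1, False) = mk2 (-1/t) (1/t) 0 1"
| "burau_gen t (S2, True) = mk2 1 0 t (-t)"
| "burau_gen t (S2, False) = mk2 1 0 1 (-1/t)"

definition burau :: "complex \<Rightarrow> bword \<Rightarrow> cmat2" where
  "burau t w = foldr (\<lambda>x A. burau_gen t x ** A) w (mat 1)"

text \<open>Faithfulness of the specialisation: injective on B_3.\<close>
definition burau_faithful :: "complex \<Rightarrow> bool" where
  "burau_faithful t \<longleftrightarrow> (\<forall>w1 w2. burau t w1 = burau t w2 \<longrightarrow> braid_eq w1 w2)"

section \<open>q-rationals and the singular set\<close>

definition Rq :: "complex \<Rightarrow> cmat2" where "Rq q = mk2 q 1 0 1"
definition Rq_inv :: "complex \<Rightarrow> cmat2" where "Rq_inv q = mk2 (1/q) (-1/q) 0 1"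
definition Lq :: "complex \<Rightarrow> cmat2" where "Lq q = mk2 1 0 1 (1/q)"
definition Lq_inv :: "complex \<Rightarrow> cmat2" where "Lq_inv q = mk2 1 0 (-q) q"

text \<open>Integer power of a matrix given the matrix and its inverse.\<close>
definition ipow :: "cmat2 \<Rightarrow> cmat2 \<Rightarrow> int \<Rightarrow> cmat2" where
  "ipow A Ainv k = (if 0 \<le> k then foldr (**) (replicate (nat k) A) (mat 1)
                    else foldr (**) (replicate (nat (-k)) Ainv) (mat 1))"

text \<open>M_q = R_q^{a1} L_q^{a2} ... R_q^{a(2m-1)} L_q^{a(2m)}, exponents given as list of pairs.\<close>
definition Mq :: "(int \<times> int) list \<Rightarrow> complex \<Rightarrow> cmat2" where
  "Mq as q = foldr (\<lambda>(a, b) A. ipow (Rq q) (Rq_inv q) a ** ipow (Lq q) (Lq_inv q) b ** A) as (mat 1)"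

text \<open>Entry (1,1) is the q-numerator, entry (2,1) the q-denominator; at q = 1 we get M itself.\<close>
definition qnum :: "(int \<times> int) list \<Rightarrow> complex \<Rightarrow> complex" where "qnum as q = Mq as q $ 1 $ 1"
definition qden :: "(int \<times> int) list \<Rightarrow> complex \<Rightarrow> complex" where "qden as q = Mq as q $ 2 $ 1"

text \<open>Singular set: complex poles (in C^*) of q-rationals [r/s]_q, s \<noteq> 0.\<close>
definition singular_set :: "complex set" where
  "singular_set = {q0. q0 \<noteq> 0 \<and> (\<exists>as. qden as 1 \<noteq> 0 \<and> is_pole (\<lambda>q. qnum as q / qden as q) q0)}"

definition ext_singular_set :: "complex set" where
  "ext_singular_set = singular_set \<union> {1}"

end

theory Submission
  imports Defs
begin

no_notation fps_nth (infixl \<open>$\<close> 75)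


lemma two_ne_one [simp]: "(2::2) \<noteq> 1" "(1::2) \<noteq> 2"
  by simp_all

lemma mk2_nth [simp]:
  "mk2 a b c d $ 1 $ 1 = a" "mk2 a b c d $ 1 $ 2 = b" "mk2 a b c d $ 2 $ 1 = c" "mk2 a b c d $ 2 $ 2 = d"
  by (simp_all add: mk2_def)

lemma mat_eq2: "(A::cmat2) = B \<longleftrightarrow> A$1$1 = B$1$1 \<and> A$1$2 = B$1$2 \<and> A$2$1 = B$2$1 \<and> A$2$2 = B$2$2"
proof
  assume h: "A$1$1 = B$1$1 \<and> A$1$2 = B$1$2 \<and> A$2$1 = B$2$1 \<and> A$2$2 = B$2$2"
  have "A$i$j = B$i$j" for i j :: 2
    using h exhaust_2[of i] exhaust_2[of j] by (elim disjE) simp_all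
  then show "A = B" by (simp add: vec_eq_iff)
qed simp

lemma mk2_eta: "(A::cmat2) = mk2 (A$1$1) (A$1$2) (A$2$1) (A$2$2)"
  by (subst mat_eq2) simp

lemma mk2_eq [simp]: "mk2 a b c d = mk2 a' b' c' d' \<longleftrightarrow> a = a' \<and> b = b' \<and> c = c' \<and> d = d'"
  by (subst mat_eq2) simp

lemma mk2_mult [simp]: "mk2 a b c d ** mk2 e f g h = mk2 (a*e+b*g) (a*f+b*h) (c*e+d*g) (c*f+d*h)"
  by (subst mat_eq2) (simp add: matrix_matrix_mult_def sum_2)

lemma mat1_mk2: "(mat 1 :: cmat2) = mk2 1 0 0 1"
  by (subst mat_eq2) (simp add: mat_def)

lemma mat1_mult [simp]: "mat 1 ** (A::cmat2) = A" "A ** mat 1 = A"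
  by (simp_all add: matrix_mul_lid matrix_mul_rid)

section \<open>Braid words\<close>

definition invw :: "bword \<Rightarrow> bword" where
  "invw w = rev (map (\<lambda>(g,b). (g, \<not> b)) w)"

lemma invw_simps [simp]: "invw [] = []" "invw (x # w) = invw w @ [(fst x, \<not> snd x)]"
  "invw (u @ w) = invw w @ invw u"
  by (auto simp: invw_def case_prod_beta)

lemma invw_invw [simp]: "invw (invw w) = w"
  by (induction w) auto

lemma burau_Nil [simp]: "burau t [] = mat 1"
  by (simp add: burau_def)

lemma burau_Cons [simp]: "burau t (x # w) = burau_gen t x ** burau t w"
  by (simp add: burau_def)

lemma burau_append [simp]: "burau t (u @ w) = burau t u ** burau t w"
  by (induction u) (auto simp: matrix_mul_assoc)

lemma burau_gen_inv:
  assumes "t \<noteq> 0"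
  shows "burau_gen t (g, b) ** burau_gen t (g, \<not> b) = mat 1"
  using assms by (cases g; cases b) (auto simp: mat1_mk2 field_simps)

lemma burau_braid_eq:
  assumes "braid_eq u w" "t \<noteq> 0"
  shows "burau t u = burau t w"
  using assms(1)
proof induction
  case (cancel g b)
  then show ?case using burau_gen_inv[OF assms(2)] by simp
next
  case braid
  then show ?case by (simp add: algebra_simps)
qed auto

lemma beq_app: "braid_eq u u' \<Longrightarrow> braid_eq v v' \<Longrightarrow> braid_eq (u @ v) (u' @ v')"
proof -
  assume h1: "braid_eq u u'" and h2: "braid_eq v v'"
  have "braid_eq ([] @ u @ v) ([] @ u' @ v)" by (rule braid_eq.cong[OF h1])
  moreover have "braid_eq (u' @ v @ []) (u' @ v' @ [])" by (rule braid_eq.cong[OF h2])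
  ultimately show ?thesis by (auto intro: braid_eq.trans)
qed

lemma beq_refl [simp]: "braid_eq w w" by (rule braid_eq.refl)

lemma beq_ctx: "braid_eq u u' \<Longrightarrow> braid_eq (x @ u @ y) (x @ u' @ y)"
  by (rule braid_eq.cong)

lemma beq_inv_right: "braid_eq (w @ invw w) []"
proof (induction w)
  case Nil then show ?case by simp
next
  case (Cons x w)
  have "braid_eq ([x] @ (w @ invw w) @ [(fst x, \<not> snd x)]) ([x] @ [] @ [(fst x, \<not> snd x)])"
    by (rule beq_ctx[OF Cons.IH])
  moreover have "braid_eq [x, (fst x, \<not> snd x)] []"
    using braid_eq.cancel[of "fst x" "snd x"] by simp
  ultimately show ?case by (auto intro: braid_eq.trans)
qed

lemma beq_inv_left: "braid_eq (invw w @ w) []"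
  using beq_inv_right[of "invw w"] by simp

definition esum :: "bword \<Rightarrow> int" where
  "esum w = sum_list (map (\<lambda>x. if snd x then 1 else -1) w)"

lemma esum_append [simp]: "esum (u @ w) = esum u + esum w"
  by (simp add: esum_def)

lemma esum_braid_eq: "braid_eq u w \<Longrightarrow> esum u = esum w"
  by (induction rule: braid_eq.induct) (auto simp: esum_def)

section \<open>Relation with M_q\<close>

lemma Mq_Nil [simp]: "Mq [] q = mat 1"
  by (simp add: Mq_def)

lemma Mq_Cons [simp]: "Mq ((a,b) # as) q = ipow (Rq q) (Rq_inv q) a ** ipow (Lq q) (Lq_inv q) b ** Mq as q"
  by (simp add: Mq_def)

lemma Mq_append [simp]: "Mq (as @ bs) q = Mq as q ** Mq bs q"
  by (induction as) (auto simp: matrix_mul_assoc)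

lemma ipow_0 [simp]: "ipow A Ai 0 = mat 1" by (simp add: ipow_def)
lemma ipow_1 [simp]: "ipow A Ai 1 = A" by (simp add: ipow_def)
lemma ipow_m1 [simp]: "ipow A Ai (-1) = Ai" by (simp add: ipow_def)

fun let_as :: "gen \<times> bool \<Rightarrow> int \<times> int" where
  "let_as (S1, True) = (1, 0)"
| "let_as (S1, False) = (-1, 0)"
| "let_as (S2, True) = (0, -1)"
| "let_as (S2, False) = (0, 1)"

definition as_of :: "bword \<Rightarrow> (int \<times> int) list" where
  "as_of w = map let_as w"

lemma gen_Mq: "t \<noteq> 0 \<Longrightarrow> burau_gen t x = Mq [let_as x] (-t)"
  by (cases x rule: let_as.cases) (auto simp: Rq_def Rq_inv_def Lq_def Lq_inv_def mat1_mk2 field_simps)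

lemma burau_as: "t \<noteq> 0 \<Longrightarrow> burau t w = Mq (as_of w) (-t)"
proof (induction w)
  case Nil then show ?case by (simp add: as_of_def)
next
  case (Cons x w)
  have "burau t (x # w) = Mq [let_as x] (-t) ** Mq (as_of w) (-t)"
    using Cons gen_Mq by simp
  also have "\<dots> = Mq (as_of (x # w)) (-t)"
    by (simp add: as_of_def Mq_append[symmetric] del: Mq_append)
  finally show ?case .
qed

definition pw1 :: "int \<Rightarrow> bword" where
  "pw1 a = (if 0 \<le> a then replicate (nat a) (S1, True) else replicate (nat (-a)) (S1, False))"
definition pw2 :: "int \<Rightarrow> bword" where
  "pw2 b = (if 0 \<le> b then replicate (nat b) (S2, False) else replicate (nat (-b)) (S2, True))"

definition word_of :: "(int \<times> int) list \<Rightarrow> bword" where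
  "word_of as = concat (map (\<lambda>(a,b). pw1 a @ pw2 b) as)"

lemma burau_replicate: "burau t (replicate n x) = foldr (**) (replicate n (burau_gen t x)) (mat 1)"
  by (induction n) auto

lemma gens_as_q:
  assumes "t \<noteq> 0"
  shows "burau_gen t (S1, True) = Rq (-t)" "burau_gen t (S1, False) = Rq_inv (-t)"
        "burau_gen t (S2, False) = Lq (-t)" "burau_gen t (S2, True) = Lq_inv (-t)"
  using assms by (auto simp: Rq_def Rq_inv_def Lq_def Lq_inv_def field_simps)

lemma burau_pw1: "t \<noteq> 0 \<Longrightarrow> burau t (pw1 a) = ipow (Rq (-t)) (Rq_inv (-t)) a"
  by (simp add: pw1_def ipow_def burau_replicate gens_as_q del: burau_gen.simps foldr_replicate)

lemma burau_pw2: "t \<noteq> 0 \<Longrightarrow> burau t (pw2 b) = ipow (Lq (-t)) (Lq_inv (-t)) b"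
  by (simp add: pw2_def ipow_def burau_replicate gens_as_q del: burau_gen.simps foldr_replicate)

lemma burau_word_of: "t \<noteq> 0 \<Longrightarrow> burau t (word_of as) = Mq as (-t)"
  by (induction as) (auto simp: word_of_def burau_pw1 burau_pw2 matrix_mul_assoc)

section \<open>Analytic part\<close>

definition hol2 :: "(complex \<Rightarrow> cmat2) \<Rightarrow> bool" where
  "hol2 F \<longleftrightarrow> (\<forall>i j. (\<lambda>q. F q $ i $ j) holomorphic_on (- {0}))"

lemma hol2_mult: "hol2 F \<Longrightarrow> hol2 G \<Longrightarrow> hol2 (\<lambda>q. F q ** G q)"
  unfolding hol2_def matrix_matrix_mult_def
  by (auto intro!: holomorphic_intros)

lemma hol2_mk2:
  assumes "f1 holomorphic_on (- {0})" "f2 holomorphic_on (- {0})"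
          "f3 holomorphic_on (- {0})" "f4 holomorphic_on (- {0})"
  shows "hol2 (\<lambda>q. mk2 (f1 q) (f2 q) (f3 q) (f4 q))"
  unfolding hol2_def
proof (intro allI)
  fix i j :: 2
  show "(\<lambda>q. mk2 (f1 q) (f2 q) (f3 q) (f4 q) $ i $ j) holomorphic_on - {0}"
    using exhaust_2[of i] exhaust_2[of j] assms by (elim disjE) simp_all
qed

lemma hol2_one: "hol2 (\<lambda>q. mat 1)"
  unfolding mat1_mk2 by (rule hol2_mk2) auto

lemma hol2_pow: "hol2 F \<Longrightarrow> hol2 (\<lambda>q. foldr (**) (replicate n (F q)) (mat 1))"
  by (induction n) (auto intro: hol2_mult hol2_one)

lemma hol2_ipow: "hol2 F \<Longrightarrow> hol2 G \<Longrightarrow> hol2 (\<lambda>q. ipow (F q) (G q) k)"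
  unfolding ipow_def by (cases "0 \<le> k") (auto intro: hol2_pow simp del: foldr_replicate)

lemma hol2_gens: "hol2 Rq" "hol2 Rq_inv" "hol2 Lq" "hol2 Lq_inv"
  unfolding Rq_def Rq_inv_def Lq_def Lq_inv_def
  by (rule hol2_mk2; auto intro!: holomorphic_intros)+

lemma hol2_Mq: "hol2 (Mq as)"
proof (induction as)
  case Nil then show ?case using hol2_one by (simp add: fun_eq_iff)
next
  case (Cons p as)
  obtain a b where p: "p = (a, b)" by force
  have "hol2 (\<lambda>q. ipow (Rq q) (Rq_inv q) a ** (ipow (Lq q) (Lq_inv q) b ** Mq as q))"
    by (intro hol2_mult hol2_ipow hol2_gens Cons)
  then show ?case by (simp add: p matrix_mul_assoc)
qed

lemma hol_qnum: "qnum as holomorphic_on (- {0})"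
  using hol2_Mq[of as] unfolding hol2_def qnum_def by blast

lemma hol_qden: "qden as holomorphic_on (- {0})"
  using hol2_Mq[of as] unfolding hol2_def qden_def by blast

lemma isCont_hol: "f holomorphic_on (- {0}) \<Longrightarrow> (q0::complex) \<noteq> 0 \<Longrightarrow> isCont f q0"
  using holomorphic_on_imp_continuous_on continuous_on_eq_continuous_at open_Compl
  by (metis ComplI closed_singleton singletonD)

lemma pole_in_sigma:
  assumes "q0 \<noteq> 0" "qden as 1 \<noteq> 0" "qden as q0 = 0" "qnum as q0 \<noteq> 0"
  shows "q0 \<in> singular_set"
proof -
  have conn: "connected (- {0::complex})"
    by (rule connected_punctured_universe) simp
  obtain r where r: "0 < r" "\<And>z. z \<in> ball q0 r - {q0} \<Longrightarrow> qden as z \<noteq> 0"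
    using isolated_zeros[OF hol_qden[of as] _ conn, of q0 1] assms by auto
  have ev: "eventually (\<lambda>z. qden as z \<noteq> 0) (at q0)"
    unfolding eventually_at using r by (auto simp: dist_commute intro!: exI[of _ r])
  have t1: "(qnum as \<longlongrightarrow> qnum as q0) (at q0)"
    using isCont_hol[OF hol_qnum assms(1)] by (simp add: isCont_def)
  have t2': "(qden as \<longlongrightarrow> qden as q0) (at q0)"
    using isCont_hol[OF hol_qden assms(1)] by (simp add: isCont_def)
  have t2: "(qden as \<longlongrightarrow> 0) (at q0)"
    using t2' unfolding assms(3) .
  have "filterlim (qden as) (at 0) (at q0)"
    by (rule filterlim_atI[OF t2 ev])
  then have "filterlim (\<lambda>q. qnum as q / qden as q) at_infinity (at q0)"
    by (rule filterlim_divide_at_infinity[OF t1 _ assms(4)])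
  then show ?thesis
    unfolding singular_set_def is_pole_def using assms by auto
qed

lemma pole_den0:
  assumes "q0 \<noteq> 0" "is_pole (\<lambda>q. qnum as q / qden as q) q0"
  shows "qden as q0 = 0"
proof (rule ccontr)
  assume h: "qden as q0 \<noteq> 0"
  have "((\<lambda>q. qnum as q / qden as q) \<longlongrightarrow> qnum as q0 / qden as q0) (at q0)"
    using isCont_hol[OF hol_qnum assms(1)] isCont_hol[OF hol_qden assms(1)] h
    by (intro tendsto_divide) (auto simp: isCont_def)
  then show False
    using assms(2) unfolding is_pole_def
    using not_tendsto_and_filterlim_at_infinity trivial_limit_at by blast
qed

section \<open>Braid identities\<close>

declare braid_eq.trans [trans]

abbreviation "la \<equiv> (S1, True)"
abbreviation "lA \<equiv> (S1, False)"
abbreviation "lb \<equiv> (S2, True)"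
abbreviation "lB \<equiv> (S2, False)"

definition wX :: bword where "wX = [la, lb, la]"
definition wY1 :: bword where "wY1 = [la, lb]"
definition wY2 :: bword where "wY2 = [la, lb, la, lb]"
definition zw :: bword where "zw = [la, lb, la, la, lb, la]"

lemma beq_sym: "braid_eq u w \<Longrightarrow> braid_eq w u" by (rule braid_eq.sym)

lemma braid_ctx: "braid_eq (x @ [la, lb, la] @ y) (x @ [lb, la, lb] @ y)"
  by (rule beq_ctx[OF braid_eq.braid])

lemma cancel_ctx: "braid_eq (x @ [(g, b), (g, \<not> b)] @ y) (x @ y)"
  using beq_ctx[OF braid_eq.cancel[of g b], of x y] by simp

lemma cancel_ctx': "braid_eq (x @ [(g, \<not> b), (g, b)] @ y) (x @ y)"
  using cancel_ctx[of x g "\<not> b" y] by simp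

lemma dx_a: "braid_eq (wX @ [la]) ([lb] @ wX)"
  using braid_ctx[of "[]" "[la]"] by (simp add: wX_def)

lemma dx_b: "braid_eq (wX @ [lb]) ([la] @ wX)"
  using beq_sym[OF braid_ctx[of "[la]" "[]"]] by (simp add: wX_def)

lemma zw_wX: "zw = wX @ wX" by (simp add: zw_def wX_def)

lemma zc_a: "braid_eq (zw @ [la]) ([la] @ zw)"
proof -
  have "zw @ [la] = wX @ (wX @ [la]) @ []" by (simp add: zw_wX)
  also have "braid_eq \<dots> (wX @ ([lb] @ wX) @ [])" by (rule beq_ctx[OF dx_a])
  also have "\<dots> = [] @ (wX @ [lb]) @ wX" by simp
  also have "braid_eq \<dots> ([] @ ([la] @ wX) @ wX)" by (rule beq_ctx[OF dx_b])
  finally show ?thesis by (simp add: zw_wX)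
qed

lemma zc_b: "braid_eq (zw @ [lb]) ([lb] @ zw)"
proof -
  have "zw @ [lb] = wX @ (wX @ [lb]) @ []" by (simp add: zw_wX)
  also have "braid_eq \<dots> (wX @ ([la] @ wX) @ [])" by (rule beq_ctx[OF dx_b])
  also have "\<dots> = [] @ (wX @ [la]) @ wX" by simp
  also have "braid_eq \<dots> ([] @ ([lb] @ wX) @ wX)" by (rule beq_ctx[OF dx_a])
  finally show ?thesis by (simp add: zw_wX)
qed

lemma zc_inv:
  assumes "braid_eq (zw @ [(g, True)]) ([(g, True)] @ zw)"
  shows "braid_eq (zw @ [(g, False)]) ([(g, False)] @ zw)"
proof -
  have "braid_eq ([(g, False)] @ zw) ([(g, False)] @ zw @ [(g, True), (g, False)] @ [])"
    using beq_sym[OF cancel_ctx[of "[(g, False)] @ zw" g True "[]"]] by simp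
  also have "\<dots> = [(g, False)] @ (zw @ [(g, True)]) @ [(g, False)]" by simp
  also have "braid_eq \<dots> ([(g, False)] @ ([(g, True)] @ zw) @ [(g, False)])"
    by (rule beq_ctx[OF assms])
  also have "\<dots> = [] @ [(g, False), (g, True)] @ (zw @ [(g, False)])" by simp
  also have "braid_eq \<dots> ([] @ (zw @ [(g, False)]))"
    using cancel_ctx'[of "[]" g True "zw @ [(g, False)]"] by simp
  finally have "braid_eq ([(g, False)] @ zw) (zw @ [(g, False)])" by simp
  then show ?thesis by (rule beq_sym)
qed

lemma zc_letter: "braid_eq (zw @ [x]) ([x] @ zw)"
proof -
  obtain g b where x: "x = (g, b)" by force
  have pos: "braid_eq (zw @ [(g, True)]) ([(g, True)] @ zw)"
    using zc_a zc_b by (cases g) auto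
  show ?thesis
  proof (cases b)
    case True then show ?thesis using pos x by simp
  next
    case False then show ?thesis using zc_inv[OF pos] x by simp
  qed
qed

lemma zcent: "braid_eq (zw @ u) (u @ zw)"
proof (induction u)
  case Nil then show ?case by simp
next
  case (Cons x u)
  have "zw @ x # u = [] @ (zw @ [x]) @ u" by simp
  also have "braid_eq \<dots> ([] @ ([x] @ zw) @ u)" by (rule beq_ctx[OF zc_letter])
  also have "\<dots> = [x] @ (zw @ u) @ []" by simp
  also have "braid_eq \<dots> ([x] @ (u @ zw) @ [])" by (rule beq_ctx[OF Cons.IH])
  finally show ?case by simp
qed

lemma izcent: "braid_eq (invw zw @ u) (u @ invw zw)"
proof -
  have "braid_eq (invw zw @ u) (invw zw @ u @ (zw @ invw zw))"
    using beq_sym[OF beq_ctx[OF beq_inv_right[of zw], of "invw zw @ u" "[]"]] by simp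
  also have "\<dots> = invw zw @ (u @ zw) @ invw zw" by simp
  also have "braid_eq \<dots> (invw zw @ (zw @ u) @ invw zw)" by (rule beq_ctx[OF beq_sym[OF zcent]])
  also have "\<dots> = [] @ (invw zw @ zw) @ (u @ invw zw)" by simp
  also have "braid_eq \<dots> ([] @ [] @ (u @ invw zw))" by (rule beq_ctx[OF beq_inv_left])
  finally show ?thesis by simp
qed

definition zpow :: "int \<Rightarrow> bword" where
  "zpow k = (if 0 \<le> k then concat (replicate (nat k) zw) else concat (replicate (nat (-k)) (invw zw)))"

lemma concat_rep_snoc: "concat (replicate (Suc n) w) = concat (replicate n w) @ w"
  by (induction n) auto

lemma concat_rep_comm: "concat (replicate n w) @ w = w @ concat (replicate n w)"
  by (induction n) auto

lemma zpow_up: "braid_eq (zpow k @ zw) (zpow (k + 1))"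
proof (cases "0 \<le> k")
  case True
  then have "nat (k + 1) = Suc (nat k)" by simp
  then show ?thesis using True by (simp add: zpow_def concat_rep_comm)
next
  case False
  then obtain n where n: "nat (-k) = Suc n" "nat (-(k+1)) = n"
    by (intro that[of "nat (-k-1)"]) auto
  have "zpow k @ zw = concat (replicate n (invw zw)) @ (invw zw @ zw) @ []"
    using False n by (simp add: zpow_def concat_rep_comm)
  also have "braid_eq \<dots> (concat (replicate n (invw zw)) @ [] @ [])"
    by (rule beq_ctx[OF beq_inv_left])
  also have "\<dots> = zpow (k + 1)"
    using False n by (auto simp: zpow_def)
  finally show ?thesis .
qed

lemma zpow_down: "braid_eq (zpow k @ invw zw) (zpow (k - 1))"
proof (cases "0 < k")
  case True
  then obtain n where n: "nat k = Suc n" "nat (k - 1) = n"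
    by (intro that[of "nat (k-1)"]) auto
  have "zpow k @ invw zw = concat (replicate n zw) @ (zw @ invw zw) @ []"
    using True n by (simp add: zpow_def concat_rep_comm)
  also have "braid_eq \<dots> (concat (replicate n zw) @ [] @ [])"
    by (rule beq_ctx[OF beq_inv_right])
  also have "\<dots> = zpow (k - 1)"
    using True n by (auto simp: zpow_def)
  finally show ?thesis .
next
  case False
  then have "nat (-(k - 1)) = Suc (nat (-k))" by simp
  then show ?thesis using False by (simp add: zpow_def concat_rep_comm)
qed

lemma H_up: "braid_eq (zpow k @ G @ zw @ T) (zpow (k + 1) @ G @ T)"
proof -
  have "zpow k @ G @ zw @ T = zpow k @ (G @ zw) @ T" by simp
  also have "braid_eq \<dots> (zpow k @ (zw @ G) @ T)" by (rule beq_ctx[OF beq_sym[OF zcent]])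
  also have "\<dots> = [] @ (zpow k @ zw) @ (G @ T)" by simp
  also have "braid_eq \<dots> ([] @ zpow (k + 1) @ (G @ T))" by (rule beq_ctx[OF zpow_up])
  finally show ?thesis by simp
qed

lemma H_down: "braid_eq (zpow k @ G @ invw zw @ T) (zpow (k - 1) @ G @ T)"
proof -
  have "zpow k @ G @ invw zw @ T = zpow k @ (G @ invw zw) @ T" by simp
  also have "braid_eq \<dots> (zpow k @ (invw zw @ G) @ T)" by (rule beq_ctx[OF beq_sym[OF izcent]])
  also have "\<dots> = [] @ (zpow k @ invw zw) @ (G @ T)" by simp
  also have "braid_eq \<dots> ([] @ zpow (k - 1) @ (G @ T))" by (rule beq_ctx[OF zpow_down])
  finally show ?thesis by simp
qed

lemma Y21: "braid_eq (wY2 @ wY1) zw"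
  using beq_sym[OF braid_ctx[of "[la, lb, la]" "[]"]] by (simp add: wY1_def wY2_def zw_def)

lemma Y12: "braid_eq (wY1 @ wY2) zw"
  using Y21 by (simp add: wY1_def wY2_def)

lemma Y22: "braid_eq (wY2 @ wY2) (zw @ wY1)"
  using beq_ctx[OF Y21, of "[]" wY1] by (simp add: wY1_def wY2_def)




section \<open>Normal form modulo the centre\<close>

datatype fl = X | Y1 | Y2

fun wl :: "fl \<Rightarrow> bword" where
  "wl X = wX" | "wl Y1 = wY1" | "wl Y2 = wY2"

definition real_nf :: "int \<times> fl list \<Rightarrow> bword" where
  "real_nf st = zpow (fst st) @ concat (map wl (rev (snd st)))"

fun app1 :: "fl \<Rightarrow> int \<times> fl list \<Rightarrow> int \<times> fl list" where
  "app1 X (k, X # r) = (k + 1, r)"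
| "app1 X (k, r) = (k, X # r)"
| "app1 Y1 (k, Y1 # r) = (k, Y2 # r)"
| "app1 Y1 (k, Y2 # r) = (k + 1, r)"
| "app1 Y1 (k, r) = (k, Y1 # r)"
| "app1 Y2 (k, Y1 # r) = (k + 1, r)"
| "app1 Y2 (k, Y2 # r) = (k + 1, Y1 # r)"
| "app1 Y2 (k, r) = (k, Y2 # r)"

lemma app1_beq: "braid_eq (real_nf st @ wl l) (real_nf (app1 l st))"
proof -
  obtain k g where st: "st = (k, g)" by force
  show ?thesis
  proof (cases g)
    case Nil
    then show ?thesis using st by (cases l) (auto simp: real_nf_def)
  next
    case (Cons h r)
    define G where "G = concat (map wl (rev r))"
    have base: "real_nf (k, h # r) @ wl l = zpow k @ G @ wl h @ wl l"
      by (simp add: real_nf_def G_def)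
    show ?thesis
    proof (cases l; cases h)
      assume "l = X" "h = X"
      then show ?thesis using st Cons base H_up[of k G "[]"]
        by (simp add: real_nf_def G_def zw_wX)
    next
      assume "l = Y1" "h = Y1"
      then show ?thesis using st Cons base by (simp add: real_nf_def G_def wY1_def wY2_def)
    next
      assume "l = Y1" "h = Y2"
      have "zpow k @ G @ wY2 @ wY1 = zpow k @ G @ (wY2 @ wY1) @ []" by simp
      also have "braid_eq \<dots> (zpow k @ G @ zw @ [])" using beq_ctx[OF Y21, of "zpow k @ G" "[]"] by simp
      also have "braid_eq \<dots> (zpow (k+1) @ G @ [])" by (rule H_up)
      finally show ?thesis using \<open>l = Y1\<close> \<open>h = Y2\<close> st Cons base by (simp add: real_nf_def G_def)
    next
      assume "l = Y2" "h = Y1"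
      have "zpow k @ G @ wY1 @ wY2 = zpow k @ G @ (wY1 @ wY2) @ []" by simp
      also have "braid_eq \<dots> (zpow k @ G @ zw @ [])" using beq_ctx[OF Y12, of "zpow k @ G" "[]"] by simp
      also have "braid_eq \<dots> (zpow (k+1) @ G @ [])" by (rule H_up)
      finally show ?thesis using \<open>l = Y2\<close> \<open>h = Y1\<close> st Cons base by (simp add: real_nf_def G_def)
    next
      assume "l = Y2" "h = Y2"
      have "zpow k @ G @ wY2 @ wY2 = (zpow k @ G) @ (wY2 @ wY2) @ []" by simp
      also have "braid_eq \<dots> ((zpow k @ G) @ (zw @ wY1) @ [])" by (rule beq_ctx[OF Y22])
      also have "\<dots> = zpow k @ G @ zw @ wY1" by simp
      also have "braid_eq \<dots> (zpow (k+1) @ G @ wY1)" by (rule H_up)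
      finally show ?thesis using \<open>l = Y2\<close> \<open>h = Y2\<close> st Cons base by (simp add: real_nf_def G_def)
    qed (use st Cons in \<open>auto simp: real_nf_def\<close>)
  qed
qed

fun dec :: "gen \<times> bool \<Rightarrow> fl \<times> fl" where
  "dec (S1, True) = (Y2, X)"
| "dec (S1, False) = (X, Y1)"
| "dec (S2, True) = (X, Y2)"
| "dec (S2, False) = (Y1, X)"

lemma dec_z: "braid_eq (zw @ [x]) (wl (fst (dec x)) @ wl (snd (dec x)))"
proof (cases x rule: dec.cases)
  case 1
  then show ?thesis using braid_ctx[of "[la, lb, la]" "[la]"]
    by (simp add: zw_def wX_def wY2_def)
next
  case 2
  have "zw @ [lA] = (wX @ wY1) @ [la, lA] @ []" by (simp add: zw_def wX_def wY1_def)
  also have "braid_eq \<dots> ((wX @ wY1) @ [])" using cancel_ctx[of "wX @ wY1" S1 True "[]"] by simp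
  finally show ?thesis using 2 by simp
next
  case 3
  then show ?thesis by (simp add: zw_def wX_def wY2_def)
next
  case 4
  have "braid_eq zw (wY1 @ wX @ [lb])"
    using braid_ctx[of "[la, lb, la]" "[]"] by (simp add: zw_def wX_def wY1_def)
  then have "braid_eq (zw @ [lB]) ((wY1 @ wX @ [lb]) @ [lB])"
    using beq_ctx[of zw "wY1 @ wX @ [lb]" "[]" "[lB]"] by simp
  also have "(wY1 @ wX @ [lb]) @ [lB] = (wY1 @ wX) @ [lb, lB] @ []" by simp
  also have "braid_eq \<dots> ((wY1 @ wX) @ [])" using cancel_ctx[of "wY1 @ wX" S2 True "[]"] by simp
  finally show ?thesis using 4 by simp
qed

lemma dec_beq: "braid_eq [x] (invw zw @ wl (fst (dec x)) @ wl (snd (dec x)))"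
proof -
  have "braid_eq [x] ((invw zw @ zw) @ [x])"
    using beq_sym[OF beq_ctx[OF beq_inv_left[of zw], of "[]" "[x]"]] by simp
  also have "\<dots> = invw zw @ (zw @ [x]) @ []" by simp
  also have "braid_eq \<dots> (invw zw @ (wl (fst (dec x)) @ wl (snd (dec x))) @ [])"
    by (rule beq_ctx[OF dec_z])
  finally show ?thesis by simp
qed

definition stepb :: "gen \<times> bool \<Rightarrow> int \<times> fl list \<Rightarrow> int \<times> fl list" where
  "stepb x st = app1 (snd (dec x)) (app1 (fst (dec x)) (fst st - 1, snd st))"

lemma stepb_beq: "braid_eq (real_nf st @ [x]) (real_nf (stepb x st))"
proof -
  obtain k g where st: "st = (k, g)" by force
  define G where "G = concat (map wl (rev g))"
  define l1 where "l1 = fst (dec x)"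
  define l2 where "l2 = snd (dec x)"
  have "real_nf st @ [x] = (zpow k @ G) @ [x] @ []" by (simp add: st real_nf_def G_def)
  also have "braid_eq \<dots> ((zpow k @ G) @ (invw zw @ wl l1 @ wl l2) @ [])"
    unfolding l1_def l2_def by (rule beq_ctx[OF dec_beq])
  also have "\<dots> = zpow k @ G @ invw zw @ (wl l1 @ wl l2)" by simp
  also have "braid_eq \<dots> (zpow (k - 1) @ G @ (wl l1 @ wl l2))" by (rule H_down)
  also have "\<dots> = [] @ (real_nf (k - 1, g) @ wl l1) @ wl l2" by (simp add: real_nf_def G_def)
  also have "braid_eq \<dots> ([] @ real_nf (app1 l1 (k - 1, g)) @ wl l2)" by (rule beq_ctx[OF app1_beq])
  also have "\<dots> = [] @ (real_nf (app1 l1 (k - 1, g)) @ wl l2) @ []" by simp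
  also have "braid_eq \<dots> ([] @ real_nf (app1 l2 (app1 l1 (k - 1, g))) @ [])" by (rule beq_ctx[OF app1_beq])
  finally show ?thesis by (simp add: stepb_def st l1_def l2_def)
qed

lemma fold_beq: "braid_eq (real_nf st @ w) (real_nf (fold stepb w st))"
proof (induction w arbitrary: st)
  case Nil then show ?case by simp
next
  case (Cons x w)
  have "real_nf st @ x # w = [] @ (real_nf st @ [x]) @ w" by simp
  also have "braid_eq \<dots> ([] @ real_nf (stepb x st) @ w)" by (rule beq_ctx[OF stepb_beq])
  also have "braid_eq \<dots> (real_nf (fold stepb w (stepb x st)))" using Cons.IH by simp
  finally show ?case by simp
qed

definition nf :: "bword \<Rightarrow> int \<times> fl list" where
  "nf w = fold stepb w (0, [])"

lemma nf_beq: "braid_eq w (real_nf (nf w))"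
  using fold_beq[of "(0, [])" w] by (simp add: nf_def real_nf_def zpow_def)

fun ftyp :: "fl \<Rightarrow> bool" where
  "ftyp X = False" | "ftyp Y1 = True" | "ftyp Y2 = True"

fun alt :: "fl list \<Rightarrow> bool" where
  "alt (x # y # r) = (ftyp x \<noteq> ftyp y \<and> alt (y # r))"
| "alt _ = True"

lemma alt_tl: "alt (x # r) \<Longrightarrow> alt r"
  by (cases r) auto

lemma alt_same: "ftyp x = ftyp y \<Longrightarrow> alt (x # r) = alt (y # r)"
  by (cases r) auto

lemma app1_alt: "alt (snd st) \<Longrightarrow> alt (snd (app1 l st))"
proof -
  assume a: "alt (snd st)"
  obtain k g where st: "st = (k, g)" by force
  show ?thesis
  proof (cases g)
    case Nil then show ?thesis using st by (cases l) auto
  next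
    case (Cons h r)
    have e: "alt (Y1 # r) = alt (Y2 # r)" by (rule alt_same) simp
    have t: "alt r" using a st Cons alt_tl by simp
    show ?thesis using a st Cons e t
      by (cases l; cases h) simp_all
  qed
qed

lemma nf_alt: "alt (snd (nf w))"
proof -
  have "alt (snd st) \<Longrightarrow> alt (snd (fold stepb w st))" for st
  proof (induction w arbitrary: st)
    case Nil then show ?case by simp
  next
    case (Cons x w)
    have "alt (snd (stepb x st))" unfolding stepb_def
      by (rule app1_alt, rule app1_alt) (simp add: Cons.prems)
    then show ?case using Cons.IH by simp
  qed
  then show ?thesis by (simp add: nf_def)
qed




section \<open>Ping-pong\<close>

fun act :: "fl \<Rightarrow> real \<times> real \<Rightarrow> real \<times> real" where
  "act X (p, q) = (q, -p)"
| "act Y1 (p, q) = (q, q - p)"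
| "act Y2 (p, q) = (q - p, -p)"

definition domS :: "fl \<Rightarrow> real \<times> real \<Rightarrow> bool" where
  "domS l v = (if ftyp l then fst v * snd v < 0 else (fst v * snd v > 0 \<and> (fst v)^2 \<noteq> (snd v)^2))"

definition codS :: "fl \<Rightarrow> real \<times> real \<Rightarrow> bool" where
  "codS l v = (if ftyp l then (fst v * snd v > 0 \<and> (fst v)^2 \<noteq> (snd v)^2)
               else (fst v * snd v < 0 \<and> (fst v)^2 \<noteq> (snd v)^2))"

lemma PP1: "domS l v \<Longrightarrow> codS l (act l v)"
proof -
  assume d: "domS l v"
  obtain p q where v: "v = (p, q)" by force
  have s: "0 \<le> p * p" "0 \<le> q * q" by simp_all
  show ?thesis
  proof (cases l)
    case X
    then show ?thesis using d v by (auto simp: domS_def codS_def power2_eq_square algebra_simps)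
  next
    case Y1
    then show ?thesis using d v by (auto simp: domS_def codS_def power2_eq_square algebra_simps; insert s; linarith)
  next
    case Y2
    then show ?thesis using d v by (auto simp: domS_def codS_def power2_eq_square algebra_simps; insert s; linarith)
  qed
qed

lemma cod_dom: "ftyp l \<noteq> ftyp m \<Longrightarrow> codS l w \<Longrightarrow> domS m w"
  by (auto simp: codS_def domS_def split: if_splits)

lemma cod_sq: "codS l v \<Longrightarrow> (fst v)^2 \<noteq> (snd v)^2"
  by (auto simp: codS_def split: if_splits)

lemma PP2: "alt r \<Longrightarrow> r \<noteq> [] \<Longrightarrow> domS (hd r) v \<Longrightarrow> codS (last r) (fold act r v)"
proof (induction r arbitrary: v)
  case Nil then show ?case by simp
next
  case (Cons l r)
  show ?case
  proof (cases r)
    case Nil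
    then show ?thesis using Cons.prems PP1 by simp
  next
    case (Cons m r')
    have "ftyp l \<noteq> ftyp m" using Cons.prems(1) Cons by simp
    moreover have "codS l (act l v)" using PP1 Cons.prems(3) by simp
    ultimately have "domS (hd r) (act l v)" using cod_dom Cons by simp
    moreover have "alt r" using Cons.prems(1) alt_tl by blast
    ultimately have "codS (last r) (fold act r (act l v))" using Cons.IH Cons by simp
    then show ?thesis using Cons by simp
  qed
qed

definition app :: "cmat2 \<Rightarrow> complex \<times> complex \<Rightarrow> complex \<times> complex" where
  "app M v = (M$1$1 * fst v + M$1$2 * snd v, M$2$1 * fst v + M$2$2 * snd v)"

lemma app_mult: "app (M ** N) v = app M (app N v)"
  by (simp add: app_def matrix_matrix_mult_def sum_2 algebra_simps)

lemma app_one: "app (mat 1) v = v"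
  by (simp add: app_def mat1_mk2)

definition cv :: "real \<times> real \<Rightarrow> complex \<times> complex" where
  "cv v = (of_real (fst v), of_real (snd v))"

lemma app_wl: "app (burau (-1) (wl l)) (cv v) = cv (act l v)"
proof -
  obtain p q where v: "v = (p, q)" by force
  show ?thesis using v
    by (cases l) (auto simp: wX_def wY1_def wY2_def app_def cv_def mat1_mk2 algebra_simps)
qed

lemma app_G: "app (burau (-1) (concat (map wl (rev r)))) (cv v) = cv (fold act r v)"
proof (induction r arbitrary: v)
  case Nil then show ?case by (simp add: app_one)
next
  case (Cons l r)
  have "app (burau (-1) (concat (map wl (rev (l # r))))) (cv v)
      = app (burau (-1) (concat (map wl (rev r)))) (app (burau (-1) (wl l)) (cv v))"
    by (simp add: app_mult)
  also have "\<dots> = cv (fold act r (act l v))" by (simp add: app_wl Cons.IH)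
  finally show ?case by simp
qed

lemma nonscalar:
  assumes "alt r" "r \<noteq> []"
  shows "burau (-1) (concat (map wl (rev r))) \<noteq> mk2 c 0 0 c"
proof
  assume G: "burau (-1) (concat (map wl (rev r))) = mk2 c 0 0 c"
  have sc: "cv (fold act r v) = (c * of_real (fst v), c * of_real (snd v))" for v
    using app_G[of r v] G by (simp add: app_def cv_def)
  have key: "(fst (fold act r' v))^2 \<noteq> (snd (fold act r' v))^2"
    if "alt r'" "r' \<noteq> []" "ftyp (hd r')" "fst v * snd v < 0" for r' v
  proof -
    have "domS (hd r') v" using that by (simp add: domS_def)
    then show ?thesis using PP2[OF that(1,2)] cod_sq by blast
  qed
  show False
  proof (cases "ftyp (hd r)")
    case True
    define w where "w = fold act r (-1, 1)"
    have "(fst w)^2 \<noteq> (snd w)^2" unfolding w_def using key[OF assms True] by simp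
    moreover have "of_real (fst w) = - c" "of_real (snd w) = c"
      using sc[of "(-1, 1)"] by (simp_all add: w_def cv_def)
    then have "of_real (fst w) = (of_real (- snd w) :: complex)" by simp
    then have "fst w = - snd w" using of_real_eq_iff by blast
    ultimately show False by simp
  next
    case False
    then obtain r' where r: "r = X # r'" using assms(2)
      by (cases r; cases "hd r") auto
    show False
    proof (cases "r' = []")
      case True
      show False using sc[of "(0, 1)"] r True by (simp add: cv_def)
    next
      case False
      have alt': "alt r'" using assms(1) r alt_tl by blast
      have ty: "ftyp (hd r')" using assms(1) r False by (cases r') auto
      define w where "w = fold act r' (1, -1)"
      have fw: "fold act r (1, 1) = w" by (simp add: r w_def)
      have "(fst w)^2 \<noteq> (snd w)^2" unfolding w_def using key[OF alt' False ty] by simp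
      moreover have "of_real (fst w) = c" "of_real (snd w) = c"
        using sc[of "(1, 1)"] fw by (simp_all add: cv_def)
      then have "fst w = snd w" using of_real_eq_iff by metis
      ultimately show False by simp
    qed
  qed
qed

section \<open>Powers of the centre\<close>

lemma burau_zw: "burau t zw = mk2 (t^3) 0 0 (t^3)"
  by (simp add: zw_def mat1_mk2 algebra_simps power3_eq_cube)

lemma burau_izw:
  assumes "t \<noteq> 0"
  shows "burau t (invw zw) = mk2 (1/t^3) 0 0 (1/t^3)"
proof -
  have "burau t (invw zw @ zw) = burau t []"
    by (rule burau_braid_eq[OF beq_inv_left assms])
  then have "burau t (invw zw) ** mk2 (t^3) 0 0 (t^3) = mk2 1 0 0 1"
    by (simp add: burau_zw mat1_mk2)
  then have "mk2 (burau t (invw zw) $1$1 * t^3) (burau t (invw zw) $1$2 * t^3)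
                 (burau t (invw zw) $2$1 * t^3) (burau t (invw zw) $2$2 * t^3) = mk2 1 0 0 1"
    by (subst (asm) mk2_eta[of "burau t (invw zw)"]) simp
  then show ?thesis using assms
    by (subst mk2_eta[of "burau t (invw zw)"]) (simp add: field_simps)
qed

lemma burau_rep:
  assumes "burau t w = mk2 s 0 0 s"
  shows "burau t (concat (replicate n w)) = mk2 (s^n) 0 0 (s^n)"
  by (induction n) (simp_all add: assms mat1_mk2)

definition zs :: "complex \<Rightarrow> int \<Rightarrow> complex" where
  "zs t k = (if 0 \<le> k then (t^3)^nat k else (1/t^3)^nat (-k))"

lemma burau_zpow: "t \<noteq> 0 \<Longrightarrow> burau t (zpow k) = mk2 (zs t k) 0 0 (zs t k)"
  by (simp add: zpow_def zs_def burau_rep burau_zw burau_izw)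

lemma zs_nz: "t \<noteq> 0 \<Longrightarrow> zs t k \<noteq> 0"
  by (simp add: zs_def)




section \<open>Roots of unity lie in the singular set\<close>

lemma Lpow:
  "foldr (**) (replicate n (Lq q)) (mat 1) = mk2 1 0 (\<Sum>j<n. (1/q)^j) ((1/q)^n)"
proof (induction n)
  case 0 then show ?case by (simp add: mat1_mk2)
next
  case (Suc n)
  have "(\<Sum>j<Suc n. (1/q)^j) = 1 + (1/q) * (\<Sum>j<n. (1/q)^j)"
    by (simp add: sum.lessThan_Suc_shift sum_distrib_left del: sum.lessThan_Suc)
  then show ?case using Suc by (simp add: Lq_def algebra_simps del: foldr_replicate)
qed

lemma Mq_L: "Mq [(0, int n)] q = mk2 1 0 (\<Sum>j<n. (1/q)^j) ((1/q)^n)"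
  by (simp add: ipow_def Lpow del: foldr_replicate)

lemma ru_sigma:
  assumes "q0 \<noteq> 0" "q0 \<noteq> 1" "q0 ^ m = 1" "m > 0"
  shows "q0 \<in> singular_set"
proof (rule pole_in_sigma[of q0 "[(0, int m)]"])
  show "q0 \<noteq> 0" by fact
  show "qden [(0, int m)] 1 \<noteq> 0" using assms(4) unfolding qden_def Mq_L by simp
  show "qnum [(0, int m)] q0 \<noteq> 0" unfolding qnum_def Mq_L by simp
  have x1: "1 / q0 \<noteq> 1" using assms(2) by (auto simp: field_simps)
  have xm: "(1 / q0) ^ m = 1" using assms(3) by (simp add: power_one_over)
  show "qden [(0, int m)] q0 = 0"
    using geometric_sum[OF x1, of m] xm unfolding qden_def Mq_L by simp
qed

section \<open>Faithfulness\<close>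

lemma step1:
  assumes "t0 \<noteq> 0" "- t0 \<notin> singular_set" "burau t0 w = mat 1"
  shows "burau (-1) w $ 2 $ 1 = 0"
proof (rule ccontr)
  assume h: "burau (-1) w $ 2 $ 1 \<noteq> 0"
  define as where "as = as_of w"
  have M0: "Mq as (- t0) = mat 1" using burau_as[OF assms(1)] assms(3) by (simp add: as_def)
  have M1: "Mq as 1 = burau (-1) w" using burau_as[of "-1" w] by (simp add: as_def)
  have "- t0 \<in> singular_set"
  proof (rule pole_in_sigma)
    show "- t0 \<noteq> 0" using assms(1) by simp
    show "qden as 1 \<noteq> 0" using h M1 by (simp add: qden_def)
    show "qden as (- t0) = 0" using M0 by (simp add: qden_def mat1_mk2)
    show "qnum as (- t0) \<noteq> 0" using M0 by (simp add: qnum_def mat1_mk2)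
  qed
  then show False using assms(2) by simp
qed

lemma burau_conj_one:
  assumes "t \<noteq> 0" "burau t w = mat 1"
  shows "burau t ([(g, b)] @ w @ [(g, \<not> b)]) = mat 1"
  using assms burau_gen_inv[OF assms(1), of g b] by simp

lemma step_scalar:
  assumes "t0 \<noteq> 0" "- t0 \<notin> singular_set" "burau t0 w = mat 1"
  shows "burau (-1) w = mk2 (burau (-1) w $ 1 $ 1) 0 0 (burau (-1) w $ 1 $ 1)"
proof -
  define M where "M = burau (-1) w"
  have m21: "M $ 2 $ 1 = 0" using step1[OF assms] by (simp add: M_def)
  have e1: "burau (-1) ([lB] @ w @ [(S2, \<not> False)]) $ 2 $ 1 = 0"
    by (rule step1[OF assms(1,2) burau_conj_one[OF assms(1,3)]])
  have e2: "burau (-1) ([lb] @ w @ [(S2, \<not> True)]) $ 2 $ 1 = 0"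
    by (rule step1[OF assms(1,2) burau_conj_one[OF assms(1,3)]])
  have Meta0: "M = mk2 (M$1$1) (M$1$2) 0 (M$2$2)"
    using mk2_eta[of M] m21 by simp
  have Meta: "burau (-1) w = mk2 (M$1$1) (M$1$2) 0 (M$2$2)"
    using Meta0 unfolding M_def .
  have a1: "M$1$1 - M$1$2 - M$2$2 = 0" using e1 by (simp add: Meta algebra_simps)
  have a2: "M$2$2 - M$1$1 - M$1$2 = 0" using e2 by (simp add: Meta algebra_simps)
  have "M$1$2 = 0" using a1 a2 by (simp add: algebra_simps)
  moreover have "M$2$2 = M$1$1" using a1 a2 by (simp add: algebra_simps)
  ultimately have "M = mk2 (M$1$1) 0 0 (M$1$1)" using Meta0 by simp
  then show ?thesis unfolding M_def .
qed

lemma scal_mult: "mk2 d 0 0 d ** G = mk2 (d*G$1$1) (d*G$1$2) (d*G$2$1) (d*G$2$2)"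
  by (subst mat_eq2) (simp add: matrix_matrix_mult_def sum_2)

lemma kernel_trivial:
  assumes "t0 \<noteq> 0" "- t0 \<notin> singular_set" "- t0 \<noteq> 1" "burau t0 w = mat 1"
  shows "braid_eq w []"
proof -
  obtain k g where st: "nf w = (k, g)" by force
  define c where "c = burau (-1) w $ 1 $ 1"
  have sc: "burau (-1) w = mk2 c 0 0 c" using step_scalar[OF assms(1,2,4)] by (simp add: c_def)
  have be: "braid_eq w (zpow k @ concat (map wl (rev g)))"
    using nf_beq[of w] st by (simp add: real_nf_def)
  define G where "G = burau (-1) (concat (map wl (rev g)))"
  define d where "d = zs (-1) k"
  have dnz: "d \<noteq> 0" using zs_nz[of "-1" k] by (simp add: d_def)
  have "burau (-1) w = burau (-1) (zpow k @ concat (map wl (rev g)))"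
    by (rule burau_braid_eq[OF be]) simp
  then have "mk2 c 0 0 c = mk2 d 0 0 d ** G"
    using sc burau_zpow[of "-1" k] by (simp add: G_def d_def)
  then have "mk2 c 0 0 c = mk2 (d * G$1$1) (d * G$1$2) (d * G$2$1) (d * G$2$2)"
    by (simp only: scal_mult)
  then have EE: "c = d * G$1$1 \<and> 0 = d * G$1$2 \<and> 0 = d * G$2$1 \<and> c = d * G$2$2"
    by (subst (asm) mk2_eq) assumption
  have h4: "c = d * G$1$1" "d * G$1$2 = 0" "d * G$2$1 = 0" "c = d * G$2$2"
    using EE by auto
  have "G$1$2 = 0" "G$2$1 = 0" using h4(2,3) dnz by simp_all
  moreover have "G$1$1 = c / d" "G$2$2 = c / d" using h4(1,4) dnz by (simp_all add: field_simps)
  ultimately have "G = mk2 (c/d) 0 0 (c/d)" using mk2_eta[of G] by simp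
  then have g0: "g = []"
    using nonscalar[of g "c/d"] nf_alt[of w] st by (auto simp: G_def)
  have bz: "braid_eq w (zpow k)" using be g0 by simp
  have "burau t0 w = burau t0 (zpow k)" by (rule burau_braid_eq[OF bz assms(1)])
  then have zs1: "zs t0 k = 1" using assms(4) burau_zpow[OF assms(1), of k] by (simp add: mat1_mk2)
  show ?thesis
  proof (cases "k = 0")
    case True then show ?thesis using bz by (simp add: zpow_def)
  next
    case False
    define n where "n = nat \<bar>k\<bar>"
    have npos: "n > 0" using False by (simp add: n_def)
    have "t0 ^ (3 * n) = 1"
    proof (cases "0 \<le> k")
      case True
      then show ?thesis using zs1 by (simp add: zs_def n_def power_mult)
    next
      case False
      then have "(1 / t0 ^ 3) ^ n = 1" using zs1 by (simp add: zs_def n_def)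
      then have "1 / (t0 ^ 3) ^ n = 1" by (simp add: power_one_over)
      then have "(t0 ^ 3) ^ n = 1" by (metis div_by_1 divide_divide_eq_right mult_1)
      then show ?thesis by (simp add: power_mult)
    qed
    then have "(- t0) ^ (6 * n) = 1"
      by (metis (no_types, lifting) mult.commute power_mult power_minus_even power_one even_mult_iff even_numeral mult_2 numeral_Bit0 numeral_times_numeral numeral_One mult.assoc)
    then have "- t0 \<in> singular_set"
      using ru_sigma[of "- t0" "6 * n"] assms(1,3) npos by simp
    then show ?thesis using assms(2) by simp
  qed
qed

lemma faithful_dir:
  assumes "t0 \<noteq> 0" "- t0 \<notin> singular_set" "- t0 \<noteq> 1"
  shows "burau_faithful t0"
  unfolding burau_faithful_def
proof (intro allI impI)
  fix w1 w2
  assume eq: "burau t0 w1 = burau t0 w2"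
  have "burau t0 (w1 @ invw w2) = burau t0 (w2 @ invw w2)" using eq by simp
  also have "\<dots> = burau t0 []" by (rule burau_braid_eq[OF beq_inv_right assms(1)])
  finally have "braid_eq (w1 @ invw w2) []"
    using kernel_trivial[OF assms] by simp
  have "braid_eq w1 (w1 @ (invw w2 @ w2) @ [])"
    using beq_sym[OF beq_ctx[OF beq_inv_left[of w2], of w1 "[]"]] by simp
  also have "\<dots> = [] @ (w1 @ invw w2) @ w2" by simp
  also have "braid_eq \<dots> ([] @ [] @ w2)" by (rule beq_ctx) fact
  finally show "braid_eq w1 w2" by simp
qed




section \<open>Non-faithfulness\<close>

lemma nonfaithful_m1: "\<not> burau_faithful (-1)"
proof
  assume f: "burau_faithful (-1)"
  have "burau (-1) (zw @ zw) = burau (-1) []"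
    by (simp add: burau_zw mat1_mk2)
  then have "braid_eq (zw @ zw) []" using f unfolding burau_faithful_def by blast
  then have "esum (zw @ zw) = esum []" by (rule esum_braid_eq)
  then show False by (simp add: esum_def zw_def)
qed

definition det2 :: "cmat2 \<Rightarrow> complex" where
  "det2 A = A$1$1 * A$2$2 - A$1$2 * A$2$1"

lemma det2_mult: "det2 (A ** B) = det2 A * det2 B"
  by (simp add: det2_def matrix_matrix_mult_def sum_2 algebra_simps)

lemma det2_burau_m1: "det2 (burau (-1) w) = 1"
proof (induction w)
  case Nil then show ?case by (simp add: det2_def mat1_mk2)
next
  case (Cons x w)
  have "det2 (burau_gen (-1) x) = 1"
    by (cases x rule: let_as.cases) (simp_all add: det2_def)
  then show ?case using Cons by (simp add: det2_mult)
qed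

lemma inv_adj:
  assumes "M ** Mi = mat 1" "det2 M = 1"
  shows "Mi = mk2 (M$2$2) (- M$1$2) (- M$2$1) (M$1$1)"
proof -
  define a11 a12 a21 a22 where "a11 = M$1$1" "a12 = M$1$2" "a21 = M$2$1" "a22 = M$2$2"
  define b11 b12 b21 b22 where "b11 = Mi$1$1" "b12 = Mi$1$2" "b21 = Mi$2$1" "b22 = Mi$2$2"
  have eqs: "a11 * b11 + a12 * b21 = 1" "a11 * b12 + a12 * b22 = 0"
            "a21 * b11 + a22 * b21 = 0" "a21 * b12 + a22 * b22 = 1"
    using arg_cong[OF assms(1), of "\<lambda>A. A$1$1"] arg_cong[OF assms(1), of "\<lambda>A. A$1$2"]
          arg_cong[OF assms(1), of "\<lambda>A. A$2$1"] arg_cong[OF assms(1), of "\<lambda>A. A$2$2"]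
    by (simp_all add: a11_a12_a21_a22_def b11_b12_b21_b22_def matrix_matrix_mult_def sum_2 mat1_mk2)
  have d: "a11 * a22 - a12 * a21 = 1" using assms(2) by (simp add: det2_def a11_a12_a21_a22_def)
  have "b11 = b11 * (a11 * a22 - a12 * a21)" using d by simp
  also have "\<dots> = a22 * (a11 * b11 + a12 * b21) - a12 * (a21 * b11 + a22 * b21)" by (simp add: algebra_simps)
  finally have E: "b11 = a22" using eqs by simp
  have "b12 = b12 * (a11 * a22 - a12 * a21)" using d by simp
  also have "\<dots> = a22 * (a11 * b12 + a12 * b22) - a12 * (a21 * b12 + a22 * b22)" by (simp add: algebra_simps)
  finally have F: "b12 = - a12" using eqs by simp
  have "b21 = b21 * (a11 * a22 - a12 * a21)" using d by simp
  also have "\<dots> = a11 * (a21 * b11 + a22 * b21) - a21 * (a11 * b11 + a12 * b21)" by (simp add: algebra_simps)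
  finally have G: "b21 = - a21" using eqs by simp
  have "b22 = b22 * (a11 * a22 - a12 * a21)" using d by simp
  also have "\<dots> = a11 * (a21 * b12 + a22 * b22) - a21 * (a11 * b12 + a12 * b22)" by (simp add: algebra_simps)
  finally have H: "b22 = a11" using eqs by simp
  show ?thesis using mk2_eta[of Mi] E F G H by (simp add: a11_a12_a21_a22_def b11_b12_b21_b22_def)
qed

lemma noncomm:
  assumes "c \<noteq> 0"
  shows "mk2 a b c d ** (mk2 1 1 0 1 ** (mk2 a b c d ** mk2 1 (-1) 0 1))
         \<noteq> (mk2 1 1 0 1 ** (mk2 a b c d ** mk2 1 (-1) 0 1)) ** mk2 a b c d"
proof
  assume h: "mk2 a b c d ** (mk2 1 1 0 1 ** (mk2 a b c d ** mk2 1 (-1) 0 1))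
         = (mk2 1 1 0 1 ** (mk2 a b c d ** mk2 1 (-1) 0 1)) ** mk2 a b c d"
  have "(mk2 a b c d ** (mk2 1 1 0 1 ** (mk2 a b c d ** mk2 1 (-1) 0 1)))$2$1
      - ((mk2 1 1 0 1 ** (mk2 a b c d ** mk2 1 (-1) 0 1)) ** mk2 a b c d)$2$1 = 2 * c * c"
    by (simp add: algebra_simps)
  then have "2 * c * c = 0" using h by simp
  then show False using assms by simp
qed

lemma unip: "(A::cmat2)$1$1 = 1 \<Longrightarrow> A$2$1 = 0 \<Longrightarrow> A$2$2 = 1 \<Longrightarrow> A = mk2 1 (A$1$2) 0 1"
  using mk2_eta[of A] by simp

lemma nonfaithful_sigma:
  assumes "t0 \<noteq> 0" "- t0 \<in> singular_set"
  shows "\<not> burau_faithful t0"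
proof
  assume faith: "burau_faithful t0"
  obtain as where as1: "qden as 1 \<noteq> 0" and pole: "is_pole (\<lambda>q. qnum as q / qden as q) (- t0)"
    using assms(2) unfolding singular_set_def by blast
  have den0: "qden as (- t0) = 0" using pole_den0[OF _ pole] assms(1) by simp
  define W where "W = word_of as"
  define P where "P = burau t0 W"
  define Pi where "Pi = burau t0 (invw W)"
  have P21: "P$2$1 = 0" using den0 burau_word_of[OF assms(1), of as] by (simp add: P_def W_def qden_def)
  have PPi: "P ** Pi = mat 1"
    using burau_braid_eq[OF beq_inv_right[of W] assms(1)] by (simp add: P_def Pi_def)
  define p11 p12 p22 where "p11 = P$1$1" "p12 = P$1$2" "p22 = P$2$2"
  define e f g h where "e = Pi$1$1" "f = Pi$1$2" "g = Pi$2$1" "h = Pi$2$2"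
  have Pe: "P = mk2 p11 p12 0 p22" using mk2_eta[of P] P21 by (simp add: p11_p12_p22_def)
  have Pie: "Pi = mk2 e f g h" using mk2_eta[of Pi] by (simp add: e_f_g_h_def)
  have eqs: "p11 * e + p12 * g = 1" "p22 * g = 0" "p22 * h = 1"
    using PPi unfolding Pe Pie by (simp_all add: mat1_mk2)
  have g0: "g = 0" using eqs(2,3) by auto
  have pe: "p11 * e = 1" using eqs(1) g0 by simp
  define U where "U = W @ [la] @ invw W @ [lA]"
  define V where "V = [la] @ U @ [lA]"
  have BU0: "burau t0 U = P ** (burau_gen t0 la ** (Pi ** burau_gen t0 lA))"
    by (simp only: U_def P_def Pi_def burau_append burau_Cons burau_Nil mat1_mult)
  have BU: "burau t0 U = mk2 p11 p12 0 p22 ** (mk2 (-t0) 1 0 1 ** (mk2 e f 0 h ** mk2 (-1/t0) (1/t0) 0 1))"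
    unfolding BU0 Pe Pie g0 by (simp del: mk2_mult)
  define u where "u = burau t0 U $ 1 $ 2"
  have "burau t0 U $ 1 $ 1 = 1" unfolding BU using pe assms(1) by (simp add: field_simps)
  moreover have "burau t0 U $ 2 $ 1 = 0" unfolding BU by simp
  moreover have "burau t0 U $ 2 $ 2 = 1" unfolding BU using eqs(3) by simp
  ultimately have Ut: "burau t0 U = mk2 1 u 0 1" unfolding u_def by (rule unip)
  have Vt: "burau t0 V = mk2 1 (- t0 * u) 0 1"
    using assms(1) by (simp add: V_def Ut field_simps)
  have eq0: "burau t0 (U @ V) = burau t0 (V @ U)"
    by (simp add: Ut Vt algebra_simps)
  have beq: "braid_eq (U @ V) (V @ U)" using faith eq0 unfolding burau_faithful_def by blast
  have eqm: "burau (-1) (U @ V) = burau (-1) (V @ U)"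
    by (rule burau_braid_eq[OF beq]) simp
  define M where "M = burau (-1) W"
  define Mi where "Mi = burau (-1) (invw W)"
  have M21: "M$2$1 \<noteq> 0" using as1 burau_word_of[of "-1" as] by (simp add: M_def W_def qden_def)
  have MMi: "M ** Mi = mat 1"
    using burau_braid_eq[OF beq_inv_right[of W], of "-1"] by (simp add: M_def Mi_def)
  have dM: "det2 M = 1" by (simp add: M_def det2_burau_m1)
  have Mie: "Mi = mk2 (M$2$2) (- M$1$2) (- M$2$1) (M$1$1)" by (rule inv_adj[OF MMi dM])
  define r v s w where "r = M$1$1" "v = M$1$2" "s = M$2$1" "w = M$2$2"
  have Me: "M = mk2 r v s w" using mk2_eta[of M] by (simp add: r_v_s_w_def)
  define U1 where "U1 = burau (-1) U"
  have U10: "U1 = M ** (burau_gen (-1) la ** (Mi ** burau_gen (-1) lA))"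
    by (simp only: U1_def U_def M_def Mi_def burau_append burau_Cons burau_Nil mat1_mult)
  have U1e: "U1 = mk2 r v s w ** (mk2 1 1 0 1 ** (mk2 w (-v) (-s) r ** mk2 1 (-1) 0 1))"
    unfolding U10 Mie using Me by (simp add: r_v_s_w_def del: mk2_mult)
  have "U1$2$1 = - s * s" unfolding U1e by (simp add: algebra_simps)
  then have c0: "U1$2$1 \<noteq> 0" using M21 by (simp add: r_v_s_w_def)
  have U1eta: "U1 = mk2 (U1$1$1) (U1$1$2) (U1$2$1) (U1$2$2)" by (rule mk2_eta)
  have V10: "burau (-1) V = burau_gen (-1) la ** (U1 ** burau_gen (-1) lA)"
    by (simp only: V_def U1_def burau_append burau_Cons burau_Nil mat1_mult)
  have V1: "burau (-1) V = mk2 1 1 0 1 ** (U1 ** mk2 1 (-1) 0 1)"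
    unfolding V10 by (simp del: mk2_mult)
  have "U1 ** (mk2 1 1 0 1 ** (U1 ** mk2 1 (-1) 0 1)) \<noteq> (mk2 1 1 0 1 ** (U1 ** mk2 1 (-1) 0 1)) ** U1"
    using noncomm[OF c0, of "U1$1$1" "U1$1$2" "U1$2$2"] U1eta by metis
  moreover have "burau (-1) (U @ V) = U1 ** (mk2 1 1 0 1 ** (U1 ** mk2 1 (-1) 0 1))"
    by (simp only: burau_append V1 U1_def)
  moreover have "burau (-1) (V @ U) = (mk2 1 1 0 1 ** (U1 ** mk2 1 (-1) 0 1)) ** U1"
    by (simp only: burau_append V1 U1_def)
  ultimately show False using eqm by simp
qed

theorem theorem1:
  fixes t0 :: complex
  assumes "t0 \<noteq> 0"
  shows "burau_faithful t0 \<longleftrightarrow> - t0 \<notin> ext_singular_set"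
proof
  assume f: "burau_faithful t0"
  show "- t0 \<notin> ext_singular_set"
  proof
    assume "- t0 \<in> ext_singular_set"
    then consider "- t0 = 1" | "- t0 \<in> singular_set" unfolding ext_singular_set_def by blast
    then show False
    proof cases
      case 1
      then have "t0 = -1" by (simp add: minus_equation_iff)
      then show False using f nonfaithful_m1 by simp
    next
      case 2
      then show False using f nonfaithful_sigma[OF assms] by simp
    qed
  qed
next
  assume "- t0 \<notin> ext_singular_set"
  then show "burau_faithful t0"
    using faithful_dir[OF assms] unfolding ext_singular_set_def by blast
qed


end
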